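(* Let $p>2$ be an integer, $\theta\in(0,1)$, $\sigma>0$, $\bm D_0\in\mathbb O(n)$, and $\bm y=\bm D_0(\bm b\circ\bm g)$ where $\bm b\in\mathbb R^n$ has i.i.d. $\mathrm{Ber}(\theta)$ entries and $\bm g\in\mathbb R^n$ has i.i.d. $\mathcal N(0,\sigma^2)$ entries, independent of $\bm b$. Then for every $\bm a\in\mathbb S^{n-1}$, $$\mathbb E_{\bm y}|\bm a^*\bm y|^p\le\gamma_p\,\theta,\qquad \gamma_p=\sigma^p2^{p/2}\frac{\Gamma(\frac{p+1}{2})}{\sqrt\pi},$$ with equality if and only if $\|\bm a^*\bm D_0\|_0=1$. In particular the maximum of $\mathbb E_{\bm y}|\bm a^*\bm y|^p$ over $\mathbb S^{n-1}$ is $\gamma_p\theta$.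
   Context: $\circ$ is the entrywise product; $\|\bm v\|_0$ is the number of nonzero entries; $\mathbb S^{n-1}$ the unit sphere in $\mathbb R^n$; $\mathbb O(n)$ the real orthogonal group; $\Gamma$ the Gamma function. *)

theory Defs
  imports "HOL-Probability.Probability"
begin

definition bg_measure :: "real \<Rightarrow> real \<Rightarrow> (('n::finite \<Rightarrow> bool) \<times> ('n \<Rightarrow> real)) measure" where
  "bg_measure \<theta> \<sigma> =
     (PiM UNIV (\<lambda>_. measure_pmf (bernoulli_pmf \<theta>))) \<Otimes>\<^sub>M
     (PiM UNIV (\<lambda>_. density lborel (normal_density 0 \<sigma>)))"

definition bg_vec :: "('n::finite \<Rightarrow> bool) \<Rightarrow> ('n \<Rightarrow> real) \<Rightarrow> real ^ 'n" where
  "bg_vec b g = (\<chi> i. (if b i then 1 else 0) * g i)"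

definition moment_p :: "nat \<Rightarrow> real \<Rightarrow> real \<Rightarrow> real^'n^'n \<Rightarrow> real^'n::finite \<Rightarrow> real" where
  "moment_p p \<theta> \<sigma> D0 a =
     (\<integral>bg. \<bar>a \<bullet> (D0 *v bg_vec (fst bg) (snd bg))\<bar> ^ p \<partial>(bg_measure \<theta> \<sigma>))"

definition gamma_p :: "nat \<Rightarrow> real \<Rightarrow> real" where
  "gamma_p p \<sigma> = \<sigma> ^ p * 2 powr (real p / 2) * Gamma ((real p + 1) / 2) / sqrt pi"

definition l0 :: "real^'n::finite \<Rightarrow> nat" where
  "l0 v = card {i. v $ i \<noteq> 0}"

end

theory Submission
  imports Defs
begin


lemma Gamma_half_nat: "Gamma (real k + 1/2) = fact (2*k) * sqrt pi / (4^k * fact k)"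
proof (induction k)
  case 0 then show ?case using Gamma_one_half_real by simp
next
  case (Suc k)
  have nz: "real k + 1/2 \<notin> \<int>\<^sub>\<le>\<^sub>0"
  proof
    assume "real k + 1/2 \<in> \<int>\<^sub>\<le>\<^sub>0"
    then have "real k + 1/2 \<le> 0" by (rule nonpos_Ints_nonpos)
    then show False by simp
  qed
  have "Gamma (real (Suc k) + 1/2) = Gamma ((real k + 1/2) + 1)" by (simp add: algebra_simps)
  also have "\<dots> = (real k + 1/2) * Gamma (real k + 1/2)" using Gamma_plus1[OF nz] .
  also have "\<dots> = (real k + 1/2) * (fact (2*k) * sqrt pi / (4^k * fact k))" using Suc by simp
  also have "\<dots> = fact (2*Suc k) * sqrt pi / (4^Suc k * fact (Suc k))"
  proof -
    have f1: "fact (2*Suc k) = (2*real k+2)*(2*real k+1)*(fact (2*k) :: real)"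
      by (simp add: fact_Suc algebra_simps)
    have f2: "fact (Suc k) = (real k + 1) * (fact k :: real)" by (simp add: fact_Suc algebra_simps)
    have K: "(fact k :: real) > 0" and Q: "(4::real)^k > 0" by auto
    have gen: "\<And>y F K Q s::real. y > 0 \<Longrightarrow> K > 0 \<Longrightarrow> Q > 0 \<Longrightarrow>
       (y - 1/2) * (F * s / (Q * K)) = (2*y)*(2*y-1)*F * s / ((4 * Q) * (y * K))"
      by (simp add: field_simps)
    have "real k + 1 > 0" by simp
    from gen[OF this K Q, of "fact (2*k)" "sqrt pi"]
    show ?thesis unfolding f1 f2 power_Suc by (simp add: algebra_simps)
  qed
  finally show ?case .
qed
lemma gauss_abs_moment:
  assumes s: "s > 0"
  shows "(\<integral>x. normal_density 0 s x * \<bar>x\<bar>^p \<partial>lborel) = gamma_p p s"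
proof (cases "even p")
  case True
  then obtain k where p: "p = 2*k" by auto
  have "(\<integral>x. normal_density 0 s x * \<bar>x\<bar>^p \<partial>lborel) = (\<integral>x. normal_density 0 s x * (x - 0)^(2*k) \<partial>lborel)"
    by (simp add: p power_mult)
  also have "\<dots> = fact (2 * k) / ((2 / s\<^sup>2)^k * fact k)"
    using integral_normal_moment_even[OF s] .
  also have "\<dots> = gamma_p p s"
  proof -
    have a: "2 powr (real p / 2) = 2^k" by (simp add: p powr_realpow)
    have b: "Gamma ((real p + 1)/2) = Gamma (real k + 1/2)" by (simp add: p add_divide_distrib)
    have g: "gamma_p p s = (s^2)^k * 2^k * (fact (2*k) * sqrt pi / (4^k * fact k)) / sqrt pi"
      unfolding gamma_p_def a b Gamma_half_nat by (simp add: p power_mult)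
    have f: "(4::real)^k = 2^k * 2^k" by (simp add: power_mult_distrib[symmetric])
    show ?thesis unfolding g f using s
      by (simp add: power_divide field_simps)
  qed
  finally show ?thesis .
next
  case False
  then obtain k where p: "p = 2*k+1" using oddE by blast
  have "(\<integral>x. normal_density 0 s x * \<bar>x\<bar>^p \<partial>lborel) = (\<integral>x. normal_density 0 s x * \<bar>x - 0\<bar>^(2*k+1) \<partial>lborel)"
    by (simp add: p)
  also have "\<dots> = 2 ^ k * s ^ (2 * k + 1) * fact k * sqrt (2 / pi)"
    using integral_normal_moment_abs_odd[OF s] .
  also have "\<dots> = gamma_p p s"
  proof -
    have a: "2 powr (real p / 2) = 2^k * sqrt 2"
      by (simp add: p add_divide_distrib powr_add powr_realpow powr_half_sqrt)
    have b: "Gamma ((real p + 1)/2) = fact k"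
    proof -
      have e: "(real p + 1)/2 = 1 + of_nat k" by (simp add: p field_simps)
      show ?thesis unfolding e by (rule Gamma_fact)
    qed
    show ?thesis unfolding gamma_p_def a b using s
      by (simp add: p real_sqrt_divide field_simps)
  qed
  finally show ?thesis .
qed



lemma gamma_p_scale: "t \<ge> 0 \<Longrightarrow> gamma_p p (\<sigma> * t) = gamma_p p \<sigma> * t^p"
  by (simp add: gamma_p_def power_mult_distrib)

lemma inner_G:
  fixes c :: "'n::finite \<Rightarrow> real"
  assumes \<sigma>: "\<sigma> > 0" and p: "p > 0"
  shows "(\<integral>\<^sup>+ g. ennreal (\<bar>\<Sum>j\<in>UNIV. c j * g j\<bar>^p) \<partial>(PiM UNIV (\<lambda>_. density lborel (normal_density 0 \<sigma>))))
         = ennreal (gamma_p p \<sigma> * sqrt (\<Sum>j\<in>UNIV. (c j)\<^sup>2)^p)"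
proof -
  define N where "N = density lborel (normal_density 0 \<sigma>)"
  define G where "G = (PiM UNIV (\<lambda>_::'n. N))"
  have PN: "prob_space N" unfolding N_def using prob_space_normal_density[OF \<sigma>] .
  interpret G: prob_space G unfolding G_def by (intro prob_space_PiM PN)
  have setsN: "sets N = sets lborel" unfolding N_def by simp
  have compG: "distr G N (\<lambda>g. g j) = N" for j
    unfolding G_def by (rule distr_PiM_component) (auto intro: PN)
  have measj: "(\<lambda>g. g j) \<in> measurable G N" for j
    unfolding G_def by simp
  have dist1: "distributed G lborel (\<lambda>g. g j) (normal_density 0 \<sigma>)" for j
  proof -
    have "distr G lborel (\<lambda>g. g j) = distr G N (\<lambda>g. g j)"
      by (rule distr_cong) (auto simp: setsN)
    also have "\<dots> = density lborel (normal_density 0 \<sigma>)" using compG N_def by simp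
    finally show ?thesis unfolding distributed_def using measj[of j]
      by (auto simp: measurable_cong_sets[OF refl setsN])
  qed
  have indep0: "G.indep_vars (\<lambda>_. N) (\<lambda>j g. g j) UNIV"
  proof (subst G.indep_vars_iff_distr_eq_PiM)
    show "UNIV \<noteq> {}" by simp
    show "(\<lambda>g. g j) \<in> measurable G N" for j using measj .
    have "distr G (PiM UNIV (\<lambda>_. N)) (\<lambda>x. \<lambda>i\<in>UNIV. x i) = distr G G (\<lambda>x. x)"
      by (rule distr_cong) (auto simp: G_def)
    also have "\<dots> = G" by (rule distr_id)
    also have "\<dots> = PiM UNIV (\<lambda>i. distr G N (\<lambda>x. x i))" unfolding compG by (simp add: G_def)
    finally show "distr G (PiM UNIV (\<lambda>_. N)) (\<lambda>x. \<lambda>i\<in>UNIV. x i) = PiM UNIV (\<lambda>i. distr G N (\<lambda>x. x i))" .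
  qed
  define I where "I = {j. c j \<noteq> 0}"
  have sumI: "(\<Sum>j\<in>UNIV. c j * g j) = (\<Sum>j\<in>I. c j * g j)" for g
    by (rule sum.mono_neutral_right) (auto simp: I_def)
  have sumI2: "(\<Sum>j\<in>UNIV. (c j)\<^sup>2) = (\<Sum>j\<in>I. (c j)\<^sup>2)"
    by (rule sum.mono_neutral_right) (auto simp: I_def)
  show ?thesis
  proof (cases "I = {}")
    case True
    then show ?thesis using p unfolding sumI sumI2 by (simp add: G_def N_def zero_power)
  next
    case False
    have indep: "G.indep_vars (\<lambda>_. borel) (\<lambda>j g. c j * g j) I"
      using G.indep_vars_compose2[OF indep0, of "\<lambda>j x. c j * x" "\<lambda>_. borel"]
      by (auto intro: G.indep_vars_subset simp: measurable_cong_sets[OF setsN refl])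
    have distj: "distributed G lborel (\<lambda>g. c j * g j) (normal_density 0 (\<bar>c j\<bar> * \<sigma>))" if "j \<in> I" for j
      using G.normal_density_affine[OF dist1[of j] \<sigma>, of "c j" 0] that by (simp add: I_def)
    have dsum: "distributed G lborel (\<lambda>g. \<Sum>j\<in>I. c j * g j)
        (normal_density (\<Sum>j\<in>I. 0) (sqrt (\<Sum>j\<in>I. (\<bar>c j\<bar> * \<sigma>)\<^sup>2)))"
      by (rule G.sum_indep_normal[OF _ False indep]) (use \<sigma> distj in \<open>auto simp: I_def\<close>)
    define s where "s = sqrt (\<Sum>j\<in>I. (\<bar>c j\<bar> * \<sigma>)\<^sup>2)"
    have s_eq: "s = \<sigma> * sqrt (\<Sum>j\<in>I. (c j)\<^sup>2)"
      unfolding s_def using \<sigma> by (simp add: power_mult_distrib sum_distrib_right[symmetric] real_sqrt_mult)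
    have Ipos: "(\<Sum>j\<in>I. (c j)\<^sup>2) > 0"
      using False by (intro sum_pos) (auto simp: I_def)
    have s_pos: "s > 0" using s_eq Ipos \<sigma> by simp
    have "(\<integral>\<^sup>+ g. ennreal (\<bar>\<Sum>j\<in>I. c j * g j\<bar>^p) \<partial>G)
        = (\<integral>\<^sup>+ x. ennreal (normal_density 0 s x) * ennreal (\<bar>x\<bar>^p) \<partial>lborel)"
      using distributed_nn_integral[OF dsum, of "\<lambda>x. ennreal (\<bar>x\<bar>^p)"] by (simp add: s_def)
    also have "\<dots> = (\<integral>\<^sup>+ x. ennreal (normal_density 0 s x * \<bar>x\<bar>^p) \<partial>lborel)"
      by (simp add: ennreal_mult)
    also have "\<dots> = ennreal (\<integral>x. normal_density 0 s x * \<bar>x\<bar>^p \<partial>lborel)"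
      using integrable_normal_moment_abs[OF s_pos, of 0 p] by (intro nn_integral_eq_integral) auto
    also have "\<dots> = ennreal (gamma_p p s)" using gauss_abs_moment[OF s_pos] by simp
    moreover have "sqrt (\<Sum>j\<in>I. (c j)\<^sup>2) \<ge> 0" using Ipos by simp
    ultimately show ?thesis unfolding sumI sumI2 s_eq G_def N_def
      by (simp add: gamma_p_scale)
  qed
qed



lemma meas_coord_bool[measurable]:
  "(\<lambda>b. b j) \<in> measurable (PiM UNIV (\<lambda>_::'n. measure_pmf (q::bool pmf))) (count_space UNIV)"
proof -
  have "(\<lambda>b. b j) \<in> measurable (PiM UNIV (\<lambda>_::'n. measure_pmf q)) (measure_pmf q)" by simp
  then show ?thesis by (simp add: measurable_cong_sets[OF refl sets_measure_pmf_count_space])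
qed

lemma meas_F:
  fixes w :: "'n::finite \<Rightarrow> real"
  shows "(\<lambda>x. ennreal (\<bar>\<Sum>j\<in>UNIV. (w j * (if fst x j then 1 else 0)) * snd x j\<bar>^p))
     \<in> borel_measurable (PiM UNIV (\<lambda>_::'n. measure_pmf q) \<Otimes>\<^sub>M PiM UNIV (\<lambda>_::'n. density lborel f))"
  by measurable

lemma meas_h:
  fixes w :: "'n::finite \<Rightarrow> real"
  shows "(\<lambda>b. K * sqrt (\<Sum>j\<in>UNIV. (w j * (if b j then 1 else 0))\<^sup>2)^p)
     \<in> borel_measurable (PiM UNIV (\<lambda>_::'n. measure_pmf q))"
  by measurable

lemma inner_bg: "a \<bullet> (D0 *v bg_vec b g) = (\<Sum>j\<in>UNIV. ((a v* D0) $ j * (if b j then 1 else 0)) * g j)"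
proof -
  have "a \<bullet> (D0 *v bg_vec b g) = (a v* D0) \<bullet> bg_vec b g" by (rule dot_lmul_matrix[symmetric])
  then show ?thesis by (simp add: inner_vec_def bg_vec_def mult.assoc)
qed

lemma gamma_p_pos: "\<sigma> > 0 \<Longrightarrow> gamma_p p \<sigma> > 0"
  unfolding gamma_p_def by (intro divide_pos_pos mult_pos_pos Gamma_real_pos) auto

lemma moment_formula:
  fixes D0 :: "real^'n::finite^'n"
  assumes \<sigma>: "\<sigma> > 0" and p: "p > 0"
  shows "moment_p p \<theta> \<sigma> D0 a = (\<integral>b. gamma_p p \<sigma> * sqrt (\<Sum>j\<in>UNIV. ((a v* D0) $ j * (if b j then 1 else 0))\<^sup>2)^p
            \<partial>(PiM UNIV (\<lambda>_::'n. measure_pmf (bernoulli_pmf \<theta>))))"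
proof -
  define B where "B = PiM UNIV (\<lambda>_::'n. measure_pmf (bernoulli_pmf \<theta>))"
  define G where "G = PiM UNIV (\<lambda>_::'n. density lborel (normal_density 0 \<sigma>))"
  define w where "w = (\<lambda>j. (a v* D0) $ j)"
  have PN: "prob_space (density lborel (normal_density 0 \<sigma>))" using prob_space_normal_density[OF \<sigma>] .
  interpret G: prob_space G unfolding G_def by (intro prob_space_PiM PN)
  define F where "F = (\<lambda>x::('n\<Rightarrow>bool)\<times>('n\<Rightarrow>real). \<bar>\<Sum>j\<in>UNIV. (w j * (if fst x j then 1 else 0)) * snd x j\<bar>^p)"
  define h where "h = (\<lambda>b::'n\<Rightarrow>bool. gamma_p p \<sigma> * sqrt (\<Sum>j\<in>UNIV. (w j * (if b j then 1 else 0))\<^sup>2)^p)"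
  have Fm: "(\<lambda>x. ennreal (F x)) \<in> borel_measurable (B \<Otimes>\<^sub>M G)"
    unfolding F_def B_def G_def by (rule meas_F)
  have Fm': "F \<in> borel_measurable (B \<Otimes>\<^sub>M G)"
    unfolding F_def B_def G_def by measurable
  have hm: "h \<in> borel_measurable B" unfolding h_def B_def by measurable
  have "moment_p p \<theta> \<sigma> D0 a = integral\<^sup>L (B \<Otimes>\<^sub>M G) F"
    unfolding moment_p_def bg_measure_def B_def G_def F_def w_def inner_bg by simp
  also have "\<dots> = enn2real (\<integral>\<^sup>+ x. ennreal (F x) \<partial>(B \<Otimes>\<^sub>M G))"
    by (rule integral_eq_nn_integral[OF Fm']) (auto simp: F_def)
  also have "(\<integral>\<^sup>+ x. ennreal (F x) \<partial>(B \<Otimes>\<^sub>M G)) = (\<integral>\<^sup>+ b. \<integral>\<^sup>+ g. ennreal (F (b, g)) \<partial>G \<partial>B)"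
    using G.nn_integral_fst[OF Fm] by simp
  also have "\<dots> = (\<integral>\<^sup>+ b. ennreal (h b) \<partial>B)"
  proof (rule nn_integral_cong)
    fix b :: "'n \<Rightarrow> bool"
    show "(\<integral>\<^sup>+ g. ennreal (F (b, g)) \<partial>G) = ennreal (h b)"
      unfolding F_def h_def G_def fst_conv snd_conv
      using inner_G[OF \<sigma> p, of "\<lambda>j. w j * (if b j then 1 else 0)"] by simp
  qed
  also have "enn2real \<dots> = integral\<^sup>L B h"
  proof (rule integral_eq_nn_integral[OF hm, symmetric])
    have "0 \<le> h b" for b
    proof -
      have "0 \<le> sqrt (\<Sum>j\<in>UNIV. (w j * (if b j then 1 else 0))\<^sup>2)" by (simp add: sum_nonneg)
      then show ?thesis unfolding h_def using gamma_p_pos[OF \<sigma>, of p] by simp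
    qed
    then show "AE x in B. 0 \<le> h x" by simp
  qed
  finally show ?thesis unfolding h_def B_def w_def .
qed



context
  fixes \<theta> :: real and B :: "('n::finite \<Rightarrow> bool) measure"
  assumes th0: "0 < \<theta>" and th1: "\<theta> < 1"
  defines "B \<equiv> PiM UNIV (\<lambda>_::'n. measure_pmf (bernoulli_pmf \<theta>))"
begin

interpretation P: finite_product_prob_space "\<lambda>_::'n. measure_pmf (bernoulli_pmf \<theta>)" UNIV
  by unfold_locales simp

lemma B_prob: "prob_space B"
  unfolding B_def by (rule P.prob_space_axioms)

lemma B_integrable:
  assumes "f \<in> borel_measurable B" "\<And>b. \<bar>f b\<bar> \<le> K"
  shows "integrable B (f :: _ \<Rightarrow> real)"
proof -
  interpret prob_space B by (rule B_prob)
  show ?thesis by (rule integrable_const_bound[of _ K]) (use assms in auto)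
qed

lemma B_coord: "(\<integral>b. (if b j then 1 else 0) \<partial>B) = \<theta>"
proof -
  have "(\<integral>b. (if b j then (1::real) else 0) \<partial>B) = (\<integral>x. (if x then (1::real) else 0) \<partial>distr B (measure_pmf (bernoulli_pmf \<theta>)) (\<lambda>b. b j))"
    by (rule integral_distr[symmetric]) (auto simp: B_def)
  also have "distr B (measure_pmf (bernoulli_pmf \<theta>)) (\<lambda>b. b j) = measure_pmf (bernoulli_pmf \<theta>)"
    unfolding B_def by (rule distr_PiM_component) (auto intro: measure_pmf.prob_space_axioms)
  also have "(\<integral>x. (if x then 1 else 0) \<partial>measure_pmf (bernoulli_pmf \<theta>)) = (\<theta>::real)"
    using th0 th1 by (subst integral_measure_pmf_real[where A=UNIV]) (auto simp: UNIV_bool)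
  finally show ?thesis .
qed

lemma B_single_sets: "{b0} \<in> sets B"
proof -
  have eq: "{b0} = (\<Pi>\<^sub>E j\<in>UNIV. {b0 j})" by (auto simp: PiE_def extensional_def fun_eq_iff)
  show ?thesis unfolding eq B_def by (rule sets_PiM_I_finite) auto
qed

lemma B_single: "measure B {b0} > 0"
proof -
  have eq: "{b0} = (\<Pi>\<^sub>E j\<in>UNIV. {b0 j})" by (auto simp: PiE_def extensional_def fun_eq_iff)
  have "measure B {b0} = (\<Prod>j\<in>UNIV. measure (measure_pmf (bernoulli_pmf \<theta>)) {b0 j})"
    unfolding eq B_def by (rule P.prob_times) auto
  also have "\<dots> > 0"
    using th0 th1 by (intro prod_pos) (auto simp: measure_pmf_single pmf_positive)
  finally show ?thesis .
qed

lemma sqrt_pow_le: "0 \<le> x \<Longrightarrow> x \<le> 1 \<Longrightarrow> 2 \<le> p \<Longrightarrow> sqrt x ^ p \<le> x"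
proof -
  assume x: "0 \<le> x" "x \<le> 1" and p: "2 \<le> p"
  have "sqrt x ^ p = sqrt x ^ 2 * sqrt x ^ (p - 2)"
  proof -
    obtain m where "p = 2 + m" using p le_Suc_ex less_imp_le by blast
    then have "p = 2 + m" "p - 2 = m" by auto
    then show ?thesis by (simp only: power_add)
  qed
  also have "\<dots> = x * sqrt x ^ (p - 2)" using x by simp
  also have "\<dots> \<le> x * 1" using x by (intro mult_left_mono power_le_one) auto
  finally show ?thesis by simp
qed

lemma sqrt_pow_less: "0 < x \<Longrightarrow> x < 1 \<Longrightarrow> 2 < p \<Longrightarrow> sqrt x ^ p < x"
proof -
  assume x: "0 < x" "x < 1" and p: "2 < p"
  have "sqrt x ^ p = sqrt x ^ 2 * sqrt x ^ (p - 2)"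
  proof -
    obtain m where "p = 2 + m" using p le_Suc_ex less_imp_le by blast
    then have "p = 2 + m" "p - 2 = m" by auto
    then show ?thesis by (simp only: power_add)
  qed
  also have "\<dots> = x * sqrt x ^ (p - 2)" using x by simp
  also have "sqrt x ^ (p - 2) \<le> sqrt x ^ 1" using x p by (intro power_decreasing) auto
  also have "sqrt x ^ 1 < 1" using x by simp
  finally show ?thesis using x by simp
qed

lemma B_main:
  fixes w :: "'n \<Rightarrow> real" and p :: nat
  assumes p: "p > 2" and w1: "(\<Sum>j\<in>UNIV. (w j)\<^sup>2) = 1"
  shows "(\<integral>b. sqrt (\<Sum>j\<in>UNIV. (w j * (if b j then 1 else 0))\<^sup>2)^p \<partial>B) \<le> \<theta>"
    and "(\<integral>b. sqrt (\<Sum>j\<in>UNIV. (w j * (if b j then 1 else 0))\<^sup>2)^p \<partial>B) = \<theta>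
           \<longleftrightarrow> card {j. w j \<noteq> 0} = 1"
proof -
  define Phi where "Phi = (\<lambda>b::'n\<Rightarrow>bool. sqrt (\<Sum>j\<in>UNIV. (w j * (if b j then 1 else 0))\<^sup>2)^p)"
  define S where "S = (\<lambda>b::'n\<Rightarrow>bool. \<Sum>j\<in>UNIV. (w j)\<^sup>2 * (if b j then 1 else 0))"
  have Seq: "(\<Sum>j\<in>UNIV. (w j * (if b j then 1 else 0))\<^sup>2) = S b" for b
    unfolding S_def by (intro sum.cong) (auto simp: power_mult_distrib)
  have Phi_S: "Phi b = sqrt (S b) ^ p" for b unfolding Phi_def Seq ..
  have S0: "0 \<le> S b" for b unfolding S_def by (intro sum_nonneg) auto
  have S1: "S b \<le> 1" for b
  proof -
    have "S b \<le> (\<Sum>j\<in>UNIV. (w j)\<^sup>2)" unfolding S_def by (intro sum_mono) auto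
    then show ?thesis using w1 by simp
  qed
  have PhiS: "Phi b \<le> S b" for b unfolding Phi_S using S0 S1 p by (intro sqrt_pow_le) auto
  have Phi0: "0 \<le> Phi b" for b unfolding Phi_S using S0 by simp
  have Sm: "S \<in> borel_measurable B" unfolding S_def B_def by measurable
  have Phim: "Phi \<in> borel_measurable B" unfolding Phi_def B_def by measurable
  have Sint: "integrable B S" by (rule B_integrable[OF Sm, of 1]) (use S0 S1 in auto)
  have Phiint: "integrable B Phi" by (rule B_integrable[OF Phim, of 1]) (use Phi0 PhiS S1 in \<open>auto intro: order_trans\<close>)
  have intS: "(\<integral>b. S b \<partial>B) = \<theta>"
  proof -
    have ints: "integrable B (\<lambda>b. (w j)\<^sup>2 * (if b j then 1 else 0 :: real))" for j
    proof -
      have m: "(\<lambda>b. (w j)\<^sup>2 * (if b j then 1 else 0 :: real)) \<in> borel_measurable B" unfolding B_def by measurable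
      show ?thesis by (rule B_integrable[OF m, of "(w j)\<^sup>2"]) auto
    qed
    have "(\<integral>b. S b \<partial>B) = (\<Sum>j\<in>UNIV. (w j)\<^sup>2 * \<theta>)"
      unfolding S_def using ints by (simp add: B_coord)
    also have "\<dots> = \<theta>" using w1 by (simp add: sum_distrib_right[symmetric])
    finally show ?thesis .
  qed
  have le: "(\<integral>b. Phi b \<partial>B) \<le> \<theta>"
    using integral_mono[OF Phiint Sint PhiS] intS by simp
  then show "(\<integral>b. sqrt (\<Sum>j\<in>UNIV. (w j * (if b j then 1 else 0))\<^sup>2)^p \<partial>B) \<le> \<theta>"
    unfolding Phi_def .
  have "(\<integral>b. Phi b \<partial>B) = \<theta> \<longleftrightarrow> card {j. w j \<noteq> 0} = 1"
  proof
    assume c: "card {j. w j \<noteq> 0} = 1"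
    then obtain k where k: "{j. w j \<noteq> 0} = {k}" by (rule card_1_singletonE)
    have wz: "j \<noteq> k \<Longrightarrow> w j = 0" for j using k by auto
    have "(\<Sum>j\<in>UNIV. (w j)\<^sup>2) = (\<Sum>j\<in>{k}. (w j)\<^sup>2)"
      by (rule sum.mono_neutral_right) (auto simp: wz)
    then have wk: "(w k)\<^sup>2 = 1" using w1 by simp
    have Sk: "S b = (if b k then 1 else 0)" for b
    proof -
      have "S b = (\<Sum>j\<in>{k}. (w j)\<^sup>2 * (if b j then 1 else 0))"
        unfolding S_def by (rule sum.mono_neutral_right) (auto simp: wz)
      then show ?thesis using wk by simp
    qed
    have "Phi b = S b" for b unfolding Phi_S Sk using p by simp
    then show "(\<integral>b. Phi b \<partial>B) = \<theta>" using intS by simp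
  next
    assume eq: "(\<integral>b. Phi b \<partial>B) = \<theta>"
    show "card {j. w j \<noteq> 0} = 1"
    proof (rule ccontr)
      assume c: "card {j. w j \<noteq> 0} \<noteq> 1"
      have "{j. w j \<noteq> 0} \<noteq> {}"
      proof
        assume "{j. w j \<noteq> 0} = {}"
        then have "\<And>j. w j = 0" by auto
        then show False using w1 by simp
      qed
      then obtain k where k: "w k \<noteq> 0" by auto
      have "{j. w j \<noteq> 0} \<noteq> {k}" using c by auto
      then obtain l where l: "w l \<noteq> 0" "l \<noteq> k" using k by auto
      define b0 where "b0 = (\<lambda>j::'n. j = k)"
      have Sb0: "S b0 = (w k)\<^sup>2"
      proof -
        have "S b0 = (\<Sum>j\<in>{k}. (w j)\<^sup>2 * (if b0 j then 1 else 0))"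
          unfolding S_def by (rule sum.mono_neutral_right) (auto simp: b0_def)
        then show ?thesis by (simp add: b0_def)
      qed
      have "(w k)\<^sup>2 + (w l)\<^sup>2 = (\<Sum>j\<in>{k,l}. (w j)\<^sup>2)" using l by simp
      also have "\<dots> \<le> (\<Sum>j\<in>UNIV. (w j)\<^sup>2)" by (rule sum_mono2) auto
      finally have "(w k)\<^sup>2 + (w l)\<^sup>2 \<le> 1" using w1 by simp
      moreover have "(w l)\<^sup>2 > 0" using l by simp
      ultimately have "(w k)\<^sup>2 < 1" by linarith
      moreover have "(w k)\<^sup>2 > 0" using k by simp
      ultimately have strict: "Phi b0 < S b0" unfolding Phi_S Sb0 using p by (intro sqrt_pow_less) auto
      define d where "d = S b0 - Phi b0"
      have dpos: "d > 0" using strict by (simp add: d_def)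
      have ineq: "d * indicator {b0} b \<le> S b - Phi b" for b
        using PhiS[of b] by (cases "b = b0") (auto simp: d_def)
      have "(\<integral>b. d * indicator {b0} b \<partial>B) \<le> (\<integral>b. S b - Phi b \<partial>B)"
      proof (rule integral_mono[OF _ _ ineq])
        show "integrable B (\<lambda>b. d * indicator {b0} b)"
        proof (rule B_integrable[of _ "\<bar>d\<bar>"])
          have "indicator {b0} \<in> borel_measurable B" by (rule borel_measurable_indicator[OF B_single_sets])
          then show "(\<lambda>b. d * indicator {b0} b) \<in> borel_measurable B" by (intro borel_measurable_times borel_measurable_const)
        qed (auto simp: indicator_def)
        show "integrable B (\<lambda>b. S b - Phi b)" using Sint Phiint by simp
      qed
      moreover have "(\<integral>b. d * indicator {b0} b \<partial>B) = d * measure B {b0}"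
      proof -
        interpret prob_space B by (rule B_prob)
        show ?thesis using B_single_sets[of b0] by simp
      qed
      moreover have "(\<integral>b. S b - Phi b \<partial>B) = \<theta> - (\<integral>b. Phi b \<partial>B)"
        using Sint Phiint intS by simp
      ultimately have "d * measure B {b0} \<le> 0" using eq by linarith
      moreover have "d * measure B {b0} > 0" using dpos B_single[of b0] by simp
      ultimately show False by simp
    qed
  qed
  then show "(\<integral>b. sqrt (\<Sum>j\<in>UNIV. (w j * (if b j then 1 else 0))\<^sup>2)^p \<partial>B) = \<theta>
           \<longleftrightarrow> card {j. w j \<noteq> 0} = 1" unfolding Phi_def .
qed

end


lemma orth_norm_w:
  fixes D0 :: "real^'n::finite^'n"
  assumes "orthogonal_matrix D0"
  shows "(a v* D0) \<bullet> (a v* D0) = a \<bullet> a"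
proof -
  have t: "a v* D0 = transpose D0 *v a" by (simp add: vector_transpose_matrix)
  have "(a v* D0) \<bullet> (a v* D0) = a \<bullet> (D0 *v (transpose D0 *v a))" unfolding t[symmetric] by (rule dot_lmul_matrix)
  also have "D0 *v (transpose D0 *v a) = (D0 ** transpose D0) *v a" by (simp only: matrix_vector_mul_assoc)
  also have "\<dots> = a" using assms by (simp add: orthogonal_matrix_def)
  finally show ?thesis .
qed

theorem mainTheorem6:
  fixes p :: nat and \<theta> \<sigma> :: real and D0 :: "real^'n::finite^'n"
  assumes "p > 2" and "0 < \<theta>" and "\<theta> < 1" and "\<sigma> > 0"
    and "orthogonal_matrix D0"
  shows "(\<forall>a::real^'n. a \<in> sphere 0 1 \<longrightarrow>
            moment_p p \<theta> \<sigma> D0 a \<le> gamma_p p \<sigma> * \<theta> \<and>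
            (moment_p p \<theta> \<sigma> D0 a = gamma_p p \<sigma> * \<theta> \<longleftrightarrow> l0 (a v* D0) = 1))
         \<and> (SUP a\<in>sphere (0::real^'n) 1. moment_p p \<theta> \<sigma> D0 a) = gamma_p p \<sigma> * \<theta>"
proof -
  note p = assms(1) and th0 = assms(2) and th1 = assms(3) and \<sigma> = assms(4) and orth = assms(5)
  have p0: "p > 0" using p by simp
  have g: "gamma_p p \<sigma> > 0" by (rule gamma_p_pos[OF \<sigma>])
  have main: "moment_p p \<theta> \<sigma> D0 a \<le> gamma_p p \<sigma> * \<theta> \<and>
            (moment_p p \<theta> \<sigma> D0 a = gamma_p p \<sigma> * \<theta> \<longleftrightarrow> l0 (a v* D0) = 1)"
    if a: "a \<in> sphere 0 1" for a :: "real^'n"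
  proof -
    define w where "w = (\<lambda>j. (a v* D0) $ j)"
    have w1: "(\<Sum>j\<in>UNIV. (w j)\<^sup>2) = 1"
    proof -
      have "(\<Sum>j\<in>UNIV. (w j)\<^sup>2) = (a v* D0) \<bullet> (a v* D0)" by (simp add: w_def inner_vec_def power2_eq_square)
      also have "\<dots> = a \<bullet> a" by (rule orth_norm_w[OF orth])
      also have "\<dots> = 1" using a by (simp add: dot_square_norm)
      finally show ?thesis .
    qed
    define I where "I = (\<integral>b. sqrt (\<Sum>j\<in>UNIV. (w j * (if b j then 1 else 0))\<^sup>2)^p
            \<partial>(PiM UNIV (\<lambda>_::'n. measure_pmf (bernoulli_pmf \<theta>))))"
    have m: "moment_p p \<theta> \<sigma> D0 a = gamma_p p \<sigma> * I"
      unfolding moment_formula[OF \<sigma> p0] I_def w_def by (rule integral_mult_right_zero)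
    have le: "I \<le> \<theta>" unfolding I_def by (rule B_main(1)[OF th0 th1 p w1])
    have eq: "I = \<theta> \<longleftrightarrow> card {j. w j \<noteq> 0} = 1" unfolding I_def by (rule B_main(2)[OF th0 th1 p w1])
    have l0: "l0 (a v* D0) = card {j. w j \<noteq> 0}" by (simp add: l0_def w_def)
    show ?thesis unfolding m l0 eq[symmetric] using g le by (simp add: mult_left_mono)
  qed
  obtain k :: 'n where True by simp
  define e :: "real^'n" where "e = axis k 1"
  define a0 where "a0 = D0 *v e"
  have a0e: "a0 v* D0 = e"
  proof -
    have "a0 v* D0 = transpose D0 *v (D0 *v e)" by (simp add: a0_def vector_transpose_matrix)
    also have "\<dots> = (transpose D0 ** D0) *v e" by (simp only: matrix_vector_mul_assoc)
    also have "\<dots> = e" using orth by (simp add: orthogonal_matrix_def)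
    finally show ?thesis .
  qed
  have a0s: "a0 \<in> sphere 0 1"
  proof -
    have "a0 \<bullet> a0 = e \<bullet> e" using orth_norm_w[OF orth, of a0] a0e by simp
    also have "\<dots> = 1" by (simp add: e_def)
    finally show ?thesis by (simp add: dot_square_norm norm_eq_1)
  qed
  have l0e: "l0 (a0 v* D0) = 1"
  proof -
    have "{i. e $ i \<noteq> 0} = {k}" by (auto simp: e_def axis_def)
    then show ?thesis by (simp add: a0e l0_def)
  qed
  have m0: "moment_p p \<theta> \<sigma> D0 a0 = gamma_p p \<sigma> * \<theta>" using main[OF a0s] l0e by simp
  have "(SUP a\<in>sphere (0::real^'n) 1. moment_p p \<theta> \<sigma> D0 a) = gamma_p p \<sigma> * \<theta>"
    by (rule cSup_eq_maximum) (use a0s m0 main in \<open>force+\<close>)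
  with main show ?thesis by blast
qed


end
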